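(* Let $(f,g)$ be a Ribaucour pair of $(\mathfrak{m}^1,\mathfrak{m}^2)$-type, let $\lambda\in\mathbb{R}$, and let $\sigma_n$ be the inversion with respect to $\mathfrak{n}:=\mathfrak{m}^1+\lambda\mathfrak{m}^2+\langle\mathfrak{m}^1+\lambda\mathfrak{m}^2,\mathfrak{p}\rangle\mathfrak{p}$. Then $(f,\sigma_n(g))$ is also a Ribaucour pair, and it has the same (R-)evolution map as $(f,g)$.
   Context: Light cone model: $\mathbb{R}^{4,2}$ with form of signature $(4,2)$, light cone $\mathcal{L}$, $\mathbb{P}(\mathcal{L})$; fixed $\mathfrak{p}$ with $\langle\mathfrak{p},\mathfrak{p}\rangle=-1$; $v$ with $\langle\mathfrak{v},\mathfrak{p}\rangle=0$ are points of $\mathbb{R}^3\cup\{\infty\}$, others oriented spheres; incidence = orthogonality. Inversion in $\mathfrak{a}$ ($\langle\mathfrak{a},\mathfrak{a}\rangle\ne0$): $\sigma_a(x)=x-\frac{2\langle x,\mathfrak{a}\rangle}{\langle\mathfrak{a},\mathfrak{a}\rangle}\mathfrak{a}$; M-inversion if $\mathfrak{a}\perp\mathfrak{p}$. Discrete curves are maps from consecutive integers to points. Ribaucour pair $(f,g)$: $f_i,f_j,g_j,g_i$ concircular for each edge; with representatives satisfying $\mathfrak{f}_i-\mathfrak{f}_j+\mathfrak{g}_j-\mathfrak{g}_i=0$, the R-evolution map consists of the M-inversions in $\mathfrak{r}_{ij}=\mathfrak{f}_i-\mathfrak{f}_j=\mathfrak{g}_i-\mathfrak{g}_j$ (mapping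 $f_i\mapsto f_j$, $g_i\mapsto g_j$). The pair is of $(\mathfrak{m}^1,\mathfrak{m}^2)$-type if $\mathrm{span}\{\mathfrak{m}^1,\mathfrak{m}^2,\mathfrak{p}\}$ is 3-dimensional and consists of fixed points of all inversions of the R-evolution map. *)

theory Defs
  imports "HOL-Analysis.Analysis"
begin

text \<open>The space R^{4,2}: vectors (x, y) with x in R^4, y in R^2 and the
symmetric bilinear form of signature (4,2).\<close>

type_synonym vec42 = "(real^4) \<times> (real^2)"

definition lf :: "vec42 \<Rightarrow> vec42 \<Rightarrow> real" where
  "lf x y = fst x \<bullet> fst y - snd x \<bullet> snd y"

text \<open>Inversion in a vector a (meaningful when lf a a is nonzero).\<close>
definition inversion :: "vec42 \<Rightarrow> vec42 \<Rightarrow> vec42" where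
  "inversion a x = x - (2 * lf x a / lf a a) *\<^sub>R a"

text \<open>Homogeneous coordinates of a point of R^3 union infinity:
a nonzero lightlike vector orthogonal to p.\<close>
definition is_point :: "vec42 \<Rightarrow> vec42 \<Rightarrow> bool" where
  "is_point p v \<longleftrightarrow> v \<noteq> 0 \<and> lf v v = 0 \<and> lf v p = 0"

definition same_point :: "vec42 \<Rightarrow> vec42 \<Rightarrow> bool" where
  "same_point v w \<longleftrightarrow> (\<exists>c. c \<noteq> 0 \<and> w = c *\<^sub>R v)"

text \<open>Four points of the projective light cone are concircular iff their
representatives span a subspace of dimension at most 3 (a circle is the
intersection of the light cone with a 3-dimensional subspace).\<close>
definition concircular :: "vec42 \<Rightarrow> vec42 \<Rightarrow> vec42 \<Rightarrow> vec42 \<Rightarrow> bool" where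
  "concircular a b c d \<longleftrightarrow> dim (span {a, b, c, d}) \<le> 3"

definition int_interval :: "int set \<Rightarrow> bool" where
  "int_interval I \<longleftrightarrow> (\<forall>i j k. i \<in> I \<longrightarrow> k \<in> I \<longrightarrow> i \<le> j \<longrightarrow> j \<le> k \<longrightarrow> j \<in> I)"

definition ribaucour_pair :: "vec42 \<Rightarrow> int set \<Rightarrow> (int \<Rightarrow> vec42) \<Rightarrow> (int \<Rightarrow> vec42) \<Rightarrow> bool" where
  "ribaucour_pair p I F G \<longleftrightarrow>
     (\<forall>i\<in>I. is_point p (F i) \<and> is_point p (G i)) \<and>
     (\<forall>i. i \<in> I \<longrightarrow> i + 1 \<in> I \<longrightarrow> concircular (F i) (F (i+1)) (G (i+1)) (G i))"

definition ribaucour_normalised :: "int set \<Rightarrow> (int \<Rightarrow> vec42) \<Rightarrow> (int \<Rightarrow> vec42) \<Rightarrow> bool" where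
  "ribaucour_normalised I F G \<longleftrightarrow>
     (\<forall>i. i \<in> I \<longrightarrow> i + 1 \<in> I \<longrightarrow> F i - F (i+1) + G (i+1) - G i = 0)"

end

theory Submission
  imports Defs
begin

lemma lf_sym: "lf x y = lf y x"
  unfolding lf_def by (simp add: inner_commute)

lemma lf_add_left: "lf (x + y) z = lf x z + lf y z"
  unfolding lf_def by (simp add: inner_add_left)

lemma lf_diff_left: "lf (x - y) z = lf x z - lf y z"
  unfolding lf_def by (simp add: inner_diff_left)

lemma lf_scale_left: "lf (c *\<^sub>R x) z = c * lf x z"
  unfolding lf_def by (simp add: algebra_simps)

lemma lf_add_right: "lf z (x + y) = lf z x + lf z y"
  by (metis lf_sym lf_add_left)

lemma lf_diff_right: "lf z (x - y) = lf z x - lf z y"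
  by (metis lf_sym lf_diff_left)

lemma lf_scale_right: "lf z (c *\<^sub>R x) = c * lf z x"
  by (metis lf_sym lf_scale_left)

lemma inv_iso:
  assumes "lf a a \<noteq> 0"
  shows "lf (inversion a x) (inversion a y) = lf x y"
  using assms unfolding inversion_def
  by (simp add: lf_diff_left lf_diff_right lf_scale_left lf_scale_right lf_sym[of a x] lf_sym[of a y]
      field_simps)

lemma inv_invol:
  assumes "lf a a \<noteq> 0"
  shows "inversion a (inversion a x) = x"
proof -
  have "lf (inversion a x) a = - lf x a"
    using assms unfolding inversion_def by (simp add: lf_diff_left lf_scale_left)
  then show ?thesis using assms unfolding inversion_def
    by (simp add: lf_diff_left lf_scale_left algebra_simps)
qed

lemma inv_diff:
  "inversion a x - inversion a y = inversion a (x - y)"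
  unfolding inversion_def by (simp add: lf_diff_left algebra_simps diff_divide_distrib)

lemma inv_fix: "lf x a = 0 \<Longrightarrow> inversion a x = x"
  unfolding inversion_def by simp

lemma conc4:
  assumes "a - b + c - d = 0"
  shows "concircular a b c d"
proof -
  have "d = a - b + c" using assms by (simp add: algebra_simps)
  hence "d \<in> span {a, b, c}"
    by (simp add: span_add span_diff span_base)
  hence sr: "span (insert d {a, b, c}) = span {a, b, c}"
    by (rule span_redundant)
  have "{a, b, c, d} = insert d {a, b, c}" by auto
  hence "span {a, b, c, d} \<subseteq> span {a, b, c}" using sr by simp
  hence "dim (span {a, b, c, d}) \<le> card {a, b, c}"
    by (intro dim_le_card) auto
  also have "card {a, b, c} \<le> 3" by (simp add: card_insert_le_m1)
  finally show ?thesis unfolding concircular_def .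
qed

theorem proposition2p6:
  fixes p m1 m2 :: vec42 and lam :: real and I :: "int set"
    and F G :: "int \<Rightarrow> vec42"
  assumes p_norm: "lf p p = -1"
    and I_int: "int_interval I"
    and rib: "ribaucour_pair p I F G"
    and norm: "ribaucour_normalised I F G"
    and nondeg: "\<And>i. i \<in> I \<Longrightarrow> i + 1 \<in> I \<Longrightarrow> lf (F i - F (i+1)) (F i - F (i+1)) \<noteq> 0"
    and type_dim: "dim (span {m1, m2, p}) = 3"
    and type_fix: "\<And>i x. i \<in> I \<Longrightarrow> i + 1 \<in> I \<Longrightarrow> x \<in> span {m1, m2, p} \<Longrightarrow>
                      inversion (F i - F (i+1)) x = x"
    and n_nonnull: "lf (m1 + lam *\<^sub>R m2 + lf (m1 + lam *\<^sub>R m2) p *\<^sub>R p)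
                       (m1 + lam *\<^sub>R m2 + lf (m1 + lam *\<^sub>R m2) p *\<^sub>R p) \<noteq> 0"
  shows "let n = m1 + lam *\<^sub>R m2 + lf (m1 + lam *\<^sub>R m2) p *\<^sub>R p in
         ribaucour_pair p I F (\<lambda>i. inversion n (G i)) \<and>
         (\<exists>F' G'. (\<forall>i\<in>I. same_point (F i) (F' i) \<and> same_point (inversion n (G i)) (G' i)) \<and>
                  ribaucour_normalised I F' G' \<and>
                  (\<forall>i. i \<in> I \<longrightarrow> i + 1 \<in> I \<longrightarrow>
                       inversion (F' i - F' (i+1)) = inversion (F i - F (i+1))))"
proof -
  define n where "n = m1 + lam *\<^sub>R m2 + lf (m1 + lam *\<^sub>R m2) p *\<^sub>R p"
  have nn: "lf n n \<noteq> 0" using n_nonnull n_def by simp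
  have np: "lf n p = 0" unfolding n_def using p_norm
    by (simp add: lf_add_left lf_scale_left)
  have nspan: "n \<in> span {m1, m2, p}" unfolding n_def
    by (intro span_add span_scale span_base) auto
  have rn: "lf (F i - F (i+1)) n = 0" if "i \<in> I" "i + 1 \<in> I" for i
  proof -
    let ?r = "F i - F (i+1)"
    have "inversion ?r n = n" using type_fix[OF that nspan] .
    hence "(2 * lf n ?r / lf ?r ?r) *\<^sub>R ?r = 0" unfolding inversion_def by simp
    moreover have "?r \<noteq> 0" using nondeg[OF that] unfolding lf_def by auto
    ultimately have "lf n ?r = 0" using nondeg[OF that] by simp
    thus ?thesis by (simp add: lf_sym)
  qed
  let ?G = "\<lambda>i. inversion n (G i)"
  have normG: "ribaucour_normalised I F ?G"
    unfolding ribaucour_normalised_def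
  proof (intro allI impI)
    fix i assume h: "i \<in> I" "i + 1 \<in> I"
    have e: "G i - G (i+1) = F i - F (i+1)"
      using norm h unfolding ribaucour_normalised_def by (auto simp: algebra_simps)
    have "?G i - ?G (i+1) = F i - F (i+1)"
      by (simp add: inv_diff e inv_fix rn[OF h])
    thus "F i - F (i + 1) + ?G (i + 1) - ?G i = 0" by (simp add: algebra_simps)
  qed
  have pts: "is_point p (?G i)" if "i \<in> I" for i
  proof -
    have g: "is_point p (G i)" using rib that unfolding ribaucour_pair_def by auto
    have "?G i \<noteq> 0"
    proof
      assume "?G i = 0"
      hence "inversion n (?G i) = 0" unfolding inversion_def by (simp add: lf_def)
      thus False using inv_invol[OF nn] g unfolding is_point_def by simp
    qed
    moreover have "lf (?G i) (?G i) = 0" using inv_iso[OF nn] g unfolding is_point_def by simp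
    moreover have "lf (?G i) p = 0" using g np unfolding is_point_def inversion_def
      by (simp add: lf_diff_left lf_scale_left)
    ultimately show ?thesis unfolding is_point_def by simp
  qed
  have ribG: "ribaucour_pair p I F ?G"
    unfolding ribaucour_pair_def
  proof (intro conjI ballI allI impI)
    fix i assume "i \<in> I" thus "is_point p (F i)" using rib unfolding ribaucour_pair_def by auto
  next
    fix i assume "i \<in> I" thus "is_point p (?G i)" by (rule pts)
  next
    fix i assume h: "i \<in> I" "i + 1 \<in> I"
    show "concircular (F i) (F (i+1)) (?G (i+1)) (?G i)"
      by (rule conc4) (use normG h in \<open>simp add: ribaucour_normalised_def\<close>)
  qed
  have sp: "same_point x x" for x unfolding same_point_def by (rule exI[of _ 1]) simp
  have ex: "\<exists>F' G'. (\<forall>i\<in>I. same_point (F i) (F' i) \<and> same_point (?G i) (G' i)) \<and>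
                  ribaucour_normalised I F' G' \<and>
                  (\<forall>i. i \<in> I \<longrightarrow> i + 1 \<in> I \<longrightarrow>
                       inversion (F' i - F' (i+1)) = inversion (F i - F (i+1)))"
    by (rule exI[of _ F], rule exI[of _ ?G]) (simp add: sp normG)
  show ?thesis unfolding Let_def n_def[symmetric]
    using ribG ex by (rule conjI)
qed

end
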